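(* For every $k\ge1$ and every word $\gamma_1\gamma_2\cdots\gamma_k\in\{A,B,C\}^k$ there is a continuous function $f_{\gamma_1\cdots\gamma_k}:T\to[0,1]$, independent of $Q$ and $\alpha$, such that for every integer $Q\ge2$ and every irrational $\alpha\in(0,1)$, with $q_1,q_2$ the denominators of the consecutive Farey fractions $a_1/q_1<\alpha<a_2/q_2$ of order $Q-1$, \[ \frac{\#\{\Gamma\in G_{Q,k}(\alpha):\ \Gamma=\gamma_1\gamma_2\cdots\gamma_k\}}{Q}=f_{\gamma_1\cdots\gamma_k}\!\left(\frac{q_1}{Q},\frac{q_2}{Q}\right). \] For $k=1$ one has $f_A(x,y)=1-x$, $f_B(x,y)=1-y$, $f_C(x,y)=x+y-1$.
   Context: $T=\{(x,y): x\le1,\ y\le1,\ x+y\ge1\}$. For irrational $\alpha$, $S_Q(\alpha)$ is the set $\{n\alpha\}$, $0\le n<Q$, on the circle $[0,1]$ with $0\sim1$; its $Q$ gaps have one of three lengths $A=q_1\alpha-a_1$, $B=a_2-q_2\alpha$, $C=A+B$, where $a_1/q_1<\alpha<a_2/q_2$ are consecutive Farey fractions in $[0,1]$ with denominators $<Q$; each gap is labelled by the letter $A$, $B$ or $C$ according to its length. $G_{Q,k}(\alpha)$ is the list (with multiplicity) of the $Q$ words $\gamma_1\cdots\gamma_k$ of labels of $k$ consecutive gaps of $S_Q(\alpha)$, starting at each of the $Q$ gaps in turn and wrapping around $0$. For example $G_{10,2}(\sqrt2)=\{AC,CA,AB,BA,AC,CA,AB,BA,AB,BA\}$. *)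

theory Defs
  imports "HOL-Analysis.Analysis"
begin

datatype letter = LA | LB | LC

definition Tri :: "(real \<times> real) set" where
  "Tri = {(x, y). x \<le> 1 \<and> y \<le> 1 \<and> x + y \<ge> 1}"

definition farey_nbrs :: "nat \<Rightarrow> real \<Rightarrow> nat \<Rightarrow> nat \<Rightarrow> nat \<Rightarrow> nat \<Rightarrow> bool" where
  "farey_nbrs N \<alpha> a1 q1 a2 q2 \<longleftrightarrow>
     1 \<le> q1 \<and> q1 \<le> N \<and> 1 \<le> q2 \<and> q2 \<le> N \<and>
     a1 \<le> q1 \<and> a2 \<le> q2 \<and> coprime a1 q1 \<and> coprime a2 q2 \<and>
     real a1 / real q1 < \<alpha> \<and> \<alpha> < real a2 / real q2 \<and>
     (\<forall>a q. 1 \<le> q \<and> q \<le> N \<and> a \<le> q \<longrightarrow>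
        \<not> (real a1 / real q1 < real a / real q \<and> real a / real q < real a2 / real q2))"

definition sorted_pts :: "nat \<Rightarrow> real \<Rightarrow> real list" where
  "sorted_pts Q \<alpha> = sort (map (\<lambda>n. frac (real n * \<alpha>)) [0..<Q])"

definition gap_len :: "nat \<Rightarrow> real \<Rightarrow> nat \<Rightarrow> real" where
  "gap_len Q \<alpha> i =
     (let s = sorted_pts Q \<alpha> in
      if Suc i < Q then s ! Suc i - s ! i else 1 - s ! i + s ! 0)"

fun letter_len :: "real \<Rightarrow> nat \<Rightarrow> nat \<Rightarrow> nat \<Rightarrow> nat \<Rightarrow> letter \<Rightarrow> real" where
  "letter_len \<alpha> a1 q1 a2 q2 LA = real q1 * \<alpha> - real a1"
| "letter_len \<alpha> a1 q1 a2 q2 LB = real a2 - real q2 * \<alpha>"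
| "letter_len \<alpha> a1 q1 a2 q2 LC = (real q1 * \<alpha> - real a1) + (real a2 - real q2 * \<alpha>)"

text \<open>Number of elements of G_{Q,k}(alpha) equal to the word w (k = length w): the number
  of starting gaps i < Q such that the k consecutive gaps i, i+1, ... (cyclically) carry
  the labels w!0, ..., w!(k-1).\<close>
definition word_count :: "nat \<Rightarrow> real \<Rightarrow> nat \<Rightarrow> nat \<Rightarrow> nat \<Rightarrow> nat \<Rightarrow> letter list \<Rightarrow> nat" where
  "word_count Q \<alpha> a1 q1 a2 q2 w =
     card {i. i < Q \<and> (\<forall>j < length w.
        gap_len Q \<alpha> ((i + j) mod Q) = letter_len \<alpha> a1 q1 a2 q2 (w ! j))}"

end

theory Submission
  imports Defs
begin

fun lo :: "'a::linordered_idom \<Rightarrow> 'a \<Rightarrow> 'a \<Rightarrow> letter \<Rightarrow> 'a" where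
  "lo Q x y LA = 0" | "lo Q x y LB = y" | "lo Q x y LC = Q - x"
fun hi :: "'a::linordered_idom \<Rightarrow> 'a \<Rightarrow> 'a \<Rightarrow> letter \<Rightarrow> 'a" where
  "hi Q x y LA = Q - x" | "hi Q x y LB = Q" | "hi Q x y LC = y"
fun dl :: "'a::linordered_idom \<Rightarrow> 'a \<Rightarrow> 'a \<Rightarrow> letter \<Rightarrow> 'a" where
  "dl Q x y LA = x" | "dl Q x y LB = - y" | "dl Q x y LC = x - y"

fun Lb :: "'a::linordered_idom \<Rightarrow> 'a \<Rightarrow> 'a \<Rightarrow> 'a \<Rightarrow> letter list \<Rightarrow> 'a" where
  "Lb Q x y s [] = 0"
| "Lb Q x y s (c # cs) = (if cs = [] then lo Q x y c - s
     else max (lo Q x y c - s) (Lb Q x y (s + dl Q x y c) cs))"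
fun Ub :: "'a::linordered_idom \<Rightarrow> 'a \<Rightarrow> 'a \<Rightarrow> 'a \<Rightarrow> letter list \<Rightarrow> 'a" where
  "Ub Q x y s [] = 0"
| "Ub Q x y s (c # cs) = (if cs = [] then hi Q x y c - s
     else min (hi Q x y c - s) (Ub Q x y (s + dl Q x y c) cs))"

fun condm :: "'a::linordered_idom \<Rightarrow> 'a \<Rightarrow> 'a \<Rightarrow> 'a \<Rightarrow> letter list \<Rightarrow> bool" where
  "condm Q x y z [] = True"
| "condm Q x y z (c # cs) = (lo Q x y c \<le> z \<and> z < hi Q x y c \<and> condm Q x y (z + dl Q x y c) cs)"

lemma condm_iff: "w \<noteq> [] \<Longrightarrow> condm Q x y (n + s) w \<longleftrightarrow> Lb Q x y s w \<le> n \<and> n < Ub Q x y s w"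
proof (induction w arbitrary: s)
  case Nil then show ?case by simp
next
  case (Cons c cs)
  show ?case
  proof (cases "cs = []")
    case True then show ?thesis by (auto simp: algebra_simps)
  next
    case False
    have "condm Q x y (n + s + dl Q x y c) cs = (Lb Q x y (s + dl Q x y c) cs \<le> n \<and> n < Ub Q x y (s + dl Q x y c) cs)"
      using Cons.IH[OF False, of "s + dl Q x y c"] by (simp add: add.assoc)
    then show ?thesis using False by (auto simp: algebra_simps)
  qed
qed

lemma Lb_ge: "w \<noteq> [] \<Longrightarrow> lo Q x y (hd w) - s \<le> Lb Q x y s w"
  by (cases w) auto
lemma Ub_le: "w \<noteq> [] \<Longrightarrow> Ub Q x y s w \<le> hi Q x y (hd w) - s"
  by (cases w) auto

lemma of_int_Lb: "of_int (Lb Q x y s w) = (Lb (of_int Q) (of_int x) (of_int y) (of_int s) w :: 'b::linordered_idom)"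
proof (induction w arbitrary: s)
  case (Cons c cs) then show ?case by (cases c) (auto simp: of_int_max)
qed simp
lemma of_int_Ub: "of_int (Ub Q x y s w) = (Ub (of_int Q) (of_int x) (of_int y) (of_int s) w :: 'b::linordered_idom)"
proof (induction w arbitrary: s)
  case (Cons c cs) then show ?case by (cases c) (auto simp: of_int_min)
qed simp

lemma hom_Lb: "(c::real) > 0 \<Longrightarrow> Lb (c * Q) (c * x) (c * y) (c * s) w = c * Lb Q x y s w"
proof (induction w arbitrary: s)
  case (Cons d cs)
  have e: "c * s + dl (c * Q) (c * x) (c * y) d = c * (s + dl Q x y d)" by (cases d) (auto simp: algebra_simps)
  have l: "lo (c * Q) (c * x) (c * y) d - c * s = c * (lo Q x y d - s)" by (cases d) (auto simp: algebra_simps)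
  have IH: "Lb (c * Q) (c * x) (c * y) (c * (s + dl Q x y d)) cs = c * Lb Q x y (s + dl Q x y d) cs"
    using Cons by blast
  show ?case using Cons.prems by (simp only: Lb.simps e l IH) (simp add: max_mult_distrib_left)
qed simp
lemma hom_Ub: "(c::real) > 0 \<Longrightarrow> Ub (c * Q) (c * x) (c * y) (c * s) w = c * Ub Q x y s w"
proof (induction w arbitrary: s)
  case (Cons d cs)
  have e: "c * s + dl (c * Q) (c * x) (c * y) d = c * (s + dl Q x y d)" by (cases d) (auto simp: algebra_simps)
  have l: "hi (c * Q) (c * x) (c * y) d - c * s = c * (hi Q x y d - s)" by (cases d) (auto simp: algebra_simps)
  have IH: "Ub (c * Q) (c * x) (c * y) (c * (s + dl Q x y d)) cs = c * Ub Q x y (s + dl Q x y d) cs"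
    using Cons by blast
  show ?case using Cons.prems by (simp only: Ub.simps e l IH) (simp add: min_mult_distrib_left)
qed simp

lemma cont_Lb: "continuous_on UNIV s \<Longrightarrow> continuous_on UNIV (\<lambda>p::real\<times>real. Lb 1 (fst p) (snd p) (s p) w)"
proof (induction w arbitrary: s)
  case Nil then show ?case by simp
next
  case (Cons c cs)
  have l: "continuous_on UNIV (\<lambda>p::real\<times>real. lo 1 (fst p) (snd p) c - s p)"
    using Cons.prems by (cases c) (auto intro!: continuous_intros)
  have d: "continuous_on UNIV (\<lambda>p::real\<times>real. s p + dl 1 (fst p) (snd p) c)"
    using Cons.prems by (cases c) (auto intro!: continuous_intros)
  show ?case using l Cons.IH[OF d] by (cases "cs = []") (auto intro!: continuous_intros)
qed
lemma cont_Ub: "continuous_on UNIV s \<Longrightarrow> continuous_on UNIV (\<lambda>p::real\<times>real. Ub 1 (fst p) (snd p) (s p) w)"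
proof (induction w arbitrary: s)
  case Nil then show ?case by simp
next
  case (Cons c cs)
  have l: "continuous_on UNIV (\<lambda>p::real\<times>real. hi 1 (fst p) (snd p) c - s p)"
    using Cons.prems by (cases c) (auto intro!: continuous_intros)
  have d: "continuous_on UNIV (\<lambda>p::real\<times>real. s p + dl 1 (fst p) (snd p) c)"
    using Cons.prems by (cases c) (auto intro!: continuous_intros)
  show ?case using l Cons.IH[OF d] by (cases "cs = []") (auto intro!: continuous_intros)
qed

definition FF :: "letter list \<Rightarrow> real \<times> real \<Rightarrow> real" where
  "FF w p = min 1 (max 0 (Ub 1 (fst p) (snd p) 0 w - Lb 1 (fst p) (snd p) 0 w))"

lemma FF_cont: "continuous_on Tri (FF w)"
proof -
  have "continuous_on UNIV (FF w)"
    unfolding FF_def using cont_Lb[of "\<lambda>_. 0" w] cont_Ub[of "\<lambda>_. 0" w]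
    by (auto intro!: continuous_intros)
  then show ?thesis using continuous_on_subset by blast
qed

lemma FF_range: "FF w ` Tri \<subseteq> {0..1}"
  by (auto simp: FF_def)

lemma FF_one: "(x, y) \<in> Tri \<Longrightarrow> FF [LA] (x, y) = 1 - x \<and> FF [LB] (x, y) = 1 - y \<and> FF [LC] (x, y) = x + y - 1"
  by (auto simp: FF_def Tri_def)


lemma irr_mult: "(\<alpha>::real) \<notin> \<rat> \<Longrightarrow> d \<noteq> 0 \<Longrightarrow> real_of_int d * \<alpha> \<notin> \<int>"
proof
  assume "\<alpha> \<notin> \<rat>" "d \<noteq> 0" "real_of_int d * \<alpha> \<in> \<int>"
  then obtain k where "real_of_int d * \<alpha> = of_int k" by (auto elim: Ints_cases)
  then have "\<alpha> = of_int k / of_int d" using \<open>d \<noteq> 0\<close> by (auto simp: field_simps)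
  then have "\<alpha> \<in> \<rat>" by (simp add: Rats_divide)
  with \<open>\<alpha> \<notin> \<rat>\<close> show False by simp
qed

lemma L1:
  fixes \<alpha> r :: real and N a1 q1 d :: nat
  assumes irr: "\<alpha> \<notin> \<rat>" and apos: "0 < \<alpha>" and alt1: "\<alpha> < 1" and q1: "1 \<le> q1" "q1 \<le> N" and cop: "coprime a1 q1"
    and lt: "real a1 / real q1 < \<alpha>" "\<alpha> < r"
    and nb: "\<forall>a q. 1 \<le> q \<and> q \<le> N \<and> a \<le> q \<longrightarrow> \<not> (real a1 / real q1 < real a / real q \<and> real a / real q < r)"
    and d: "1 \<le> d" "d \<le> N"
  shows "frac (real d * \<alpha>) \<ge> real q1 * \<alpha> - real a1 \<and> (frac (real d * \<alpha>) = real q1 * \<alpha> - real a1 \<longrightarrow> d = q1)"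
proof -
  define c where "c = \<lfloor>real d * \<alpha>\<rfloor>"
  have ni: "real d * \<alpha> \<notin> \<int>" using irr_mult[OF irr, of "int d"] d by simp
  have fr: "frac (real d * \<alpha>) = real d * \<alpha> - c" by (simp add: c_def frac_def)
  have c1: "real_of_int c < real d * \<alpha>"
    using ni by (metis c_def frac_def frac_eq_0_iff frac_ge_0 diff_gt_0_iff_gt order_le_less)
  have c0: "0 \<le> c" using apos d by (simp add: c_def)
  have "real d * \<alpha> \<le> real d" using alt1 by (simp add: mult_left_le)
  then have cd: "real_of_int c < real d" using c1 by linarith
  have q1pos: "real q1 > 0" using q1 by simp
  have dpos: "real d > 0" using d by simp
  have A: "real q1 * \<alpha> - real a1 > 0" using lt(1) q1pos by (simp add: field_simps)
  show ?thesis
  proof (cases "real a1 / real q1 < real_of_int c / real d")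
    case True
    have "\<not> (real a1 / real q1 < real (nat c) / real d \<and> real (nat c) / real d < r)"
      using nb d cd c0 by (metis int_nat_eq nat_le_iff of_int_less_iff of_int_of_nat_eq of_nat_less_iff order_le_less)
    moreover have "real_of_int c / real d < \<alpha>" using c1 dpos by (simp add: field_simps)
    ultimately show ?thesis using True c0 lt by simp
  next
    case False
    then have cq: "real_of_int c * real q1 \<le> real a1 * real d" using q1pos dpos by (simp add: field_simps)
    show ?thesis
    proof (cases "q1 \<le> d")
      case True
      have "real q1 * (real d * \<alpha> - c) \<ge> real d * (real q1 * \<alpha> - real a1)"
        using cq by (simp add: algebra_simps)
      moreover have "real d * (real q1 * \<alpha> - real a1) \<ge> real q1 * (real q1 * \<alpha> - real a1)"
        using True A by (intro mult_right_mono) auto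
      ultimately have ge: "real d * \<alpha> - c \<ge> real q1 * \<alpha> - real a1" using q1pos
        by (smt (verit) mult_le_cancel_left_pos)
      have "d = q1" if eq: "real d * \<alpha> - c = real q1 * \<alpha> - real a1"
      proof -
        have "real d * (real q1 * \<alpha> - real a1) \<le> real q1 * (real q1 * \<alpha> - real a1)"
          using \<open>real q1 * (real d * \<alpha> - c) \<ge> _\<close> eq by simp
        then have "real d \<le> real q1" using A by (simp add: mult_le_cancel_right)
        then show ?thesis using True by simp
      qed
      then show ?thesis using ge fr by simp
    next
      case False
      have strict: "real_of_int c * real q1 < real a1 * real d"
      proof (rule ccontr)
        assume "\<not> ?thesis"
        then have "c * int q1 = int a1 * int d" using cq
          by (metis (mono_tags, opaque_lifting) linorder_neqE_linordered_idom not_less of_int_eq_iff of_int_mult of_int_of_nat_eq)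
        then have "int q1 dvd int a1 * int d" by (metis dvd_triv_right)
        then have "q1 dvd a1 * d" by (metis of_nat_dvd_iff of_nat_mult)
        then have "q1 dvd d" using cop by (simp add: coprime_dvd_mult_right_iff coprime_commute)
        then show False using False d by (simp add: nat_dvd_not_less)
      qed
      define d' where "d' = q1 - d"
      define c' where "c' = int a1 - c"
      have d'1: "1 \<le> d'" "d' \<le> N" using False q1 by (auto simp: d'_def)
      have rd': "real d' = real q1 - real d" using False by (simp add: d'_def)
      have "real_of_int c' * real q1 > real a1 * real d'" using strict
        by (simp add: c'_def rd' algebra_simps)
      then have c'pos: "c' > 0" using d'1 q1pos
        by (smt (verit) mult_nonneg_nonneg of_int_le_0_iff of_nat_0_le_iff mult_nonpos_nonneg)
      have key: "real_of_int c' > real d' * \<alpha>"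
      proof (cases "c' > int d'")
        case True
        then have "real_of_int c' > real d'" by linarith
        moreover have "real d' * \<alpha> \<le> real d'" using \<open>\<alpha> < 1\<close> by (simp add: mult_left_le)
        ultimately show ?thesis by simp
      next
        case False
        have a: "real a1 / real q1 < real (nat c') / real d'"
          using \<open>real_of_int c' * real q1 > real a1 * real d'\<close> c'pos d'1 q1pos by (simp add: field_simps)
        have "\<not> (real (nat c') / real d' < r)" using nb[rule_format, of d' "nat c'"] d'1 False a c'pos
          by (simp add: nat_le_iff)
        then have "real (nat c') / real d' > \<alpha>" using lt by simp
        then show ?thesis using d'1 c'pos by (simp add: field_simps)
      qed
      have "real d * \<alpha> - c > real q1 * \<alpha> - real a1"
        using key by (simp add: c'_def rd' algebra_simps)
      then show ?thesis using fr by simp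
    qed
  qed
qed


locale fs =
  fixes Q :: nat and \<alpha> :: real and a1 q1 a2 q2 :: nat
  assumes Q2: "Q \<ge> 2" and irr: "\<alpha> \<notin> \<rat>" and apos: "0 < \<alpha>" and alt1: "\<alpha> < 1"
    and fn: "farey_nbrs (Q - 1) \<alpha> a1 q1 a2 q2"
begin

abbreviation "N \<equiv> Q - 1"
definition "A = real q1 * \<alpha> - real a1"
definition "B = real a2 - real q2 * \<alpha>"

lemma fn': "1 \<le> q1" "q1 \<le> N" "1 \<le> q2" "q2 \<le> N" "a1 \<le> q1" "a2 \<le> q2" "coprime a1 q1" "coprime a2 q2"
   "real a1 / real q1 < \<alpha>" "\<alpha> < real a2 / real q2"
   "\<forall>a q. 1 \<le> q \<and> q \<le> N \<and> a \<le> q \<longrightarrow>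
        \<not> (real a1 / real q1 < real a / real q \<and> real a / real q < real a2 / real q2)"
  using fn unfolding farey_nbrs_def by auto

lemma Apos: "A > 0" using fn'(1,9) by (simp add: A_def field_simps)
lemma Bpos: "B > 0" using fn'(3,10) by (simp add: B_def field_simps)

lemma LA1: "1 \<le> d \<Longrightarrow> d \<le> N \<Longrightarrow> frac (real d * \<alpha>) \<ge> A \<and> (frac (real d * \<alpha>) = A \<longrightarrow> d = q1)"
  unfolding A_def using L1[OF irr apos alt1 fn'(1,2,7,9,10,11)] by blast

lemma LB1: assumes "1 \<le> d" "d \<le> N" shows "1 - frac (real d * \<alpha>) \<ge> B \<and> (1 - frac (real d * \<alpha>) = B \<longrightarrow> d = q2)"
proof -
  have irr': "1 - \<alpha> \<notin> \<rat>"
  proof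
    assume "1 - \<alpha> \<in> \<rat>" then have "1 - (1 - \<alpha>) \<in> \<rat>" using Rats_diff Rats_1 by blast
    with irr show False by simp
  qed
  have cop: "coprime (q2 - a2) q2" using fn'(6,8) by (simp add: coprime_iff_gcd_eq_1 gcd_diff2_nat)
  have q2p: "real q2 > 0" using fn'(3) by simp
  have q1p: "real q1 > 0" using fn'(1) by simp
  have r1: "real (q2 - a2) / real q2 < 1 - \<alpha>" using fn'(6,10) q2p by (simp add: of_nat_diff field_simps)
  have r2: "1 - \<alpha> < 1 - real a1 / real q1" using fn'(9) by simp
  have nb: "\<forall>a q. 1 \<le> q \<and> q \<le> N \<and> a \<le> q \<longrightarrow>
        \<not> (real (q2 - a2) / real q2 < real a / real q \<and> real a / real q < 1 - real a1 / real q1)"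
  proof (intro allI impI)
    fix a q :: nat assume h: "1 \<le> q \<and> q \<le> N \<and> a \<le> q"
    have "\<not> (real a1 / real q1 < real (q - a) / real q \<and> real (q - a) / real q < real a2 / real q2)"
      using fn'(11)[rule_format, of q "q - a"] h by auto
    moreover have "real (q - a) / real q = 1 - real a / real q" using h by (simp add: of_nat_diff field_simps)
    moreover have "real (q2 - a2) / real q2 = 1 - real a2 / real q2" using fn'(6) q2p by (simp add: of_nat_diff field_simps)
    ultimately show "\<not> (real (q2 - a2) / real q2 < real a / real q \<and> real a / real q < 1 - real a1 / real q1)"
      by auto
  qed
  have L: "frac (real d * (1 - \<alpha>)) \<ge> real q2 * (1 - \<alpha>) - real (q2 - a2) \<and>
     (frac (real d * (1 - \<alpha>)) = real q2 * (1 - \<alpha>) - real (q2 - a2) \<longrightarrow> d = q2)"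
    using L1[OF irr' _ _ fn'(3,4) cop r1 r2 nb assms] apos alt1 by simp
  have ni: "real d * \<alpha> \<notin> \<int>" using irr_mult[OF irr, of "int d"] assms by simp
  have "frac (real d * (1 - \<alpha>)) = frac (- (real d * \<alpha>) + of_int (int d))" by (simp add: algebra_simps)
  also have "\<dots> = 1 - frac (real d * \<alpha>)" using ni by (simp only: frac_add_of_int_right frac_neg) simp
  finally have e1: "frac (real d * (1 - \<alpha>)) = 1 - frac (real d * \<alpha>)" .
  have e2: "real q2 * (1 - \<alpha>) - real (q2 - a2) = B" using fn'(6) by (simp add: B_def of_nat_diff algebra_simps)
  show ?thesis using L unfolding e1 e2 .
qed

lemma QQ: "q1 + q2 \<ge> Q"
proof (rule ccontr)
  assume "\<not> ?thesis"
  then have h: "1 \<le> q1 + q2" "q1 + q2 \<le> N" "a1 + a2 \<le> q1 + q2" using fn'(1,5,6) by auto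
  have q2p: "real q2 > 0" using fn'(3) by simp
  have q1p: "real q1 > 0" using fn'(1) by simp
  have "real a1 / real q1 < real a2 / real q2" using fn'(9,10) by simp
  then have lt: "real a1 * real q2 < real a2 * real q1" using q1p q2p by (simp add: field_simps)
  have "real a1 / real q1 < real (a1 + a2) / real (q1 + q2)"
    using lt q1p q2p by (simp add: field_simps)
  moreover have "real (a1 + a2) / real (q1 + q2) < real a2 / real q2"
    using lt q1p q2p by (simp add: field_simps)
  ultimately show False using fn'(11) h by blast
qed

end

lemma frac_shift: "(y::real) - v = of_int k \<Longrightarrow> 0 \<le> v \<Longrightarrow> v < 1 \<Longrightarrow> frac y = v"
  by (simp add: frac_unique_iff)

context fs begin

definition x :: "nat \<Rightarrow> real" where "x n = frac (real n * \<alpha>)"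
definition fd :: "nat \<Rightarrow> nat \<Rightarrow> real" where "fd n m = frac (x m - x n)"

lemma fd_eq: "fd n m = frac ((real m - real n) * \<alpha>)"
proof -
  have "x m - x n = (real m - real n) * \<alpha> + of_int (\<lfloor>real n * \<alpha>\<rfloor> - \<lfloor>real m * \<alpha>\<rfloor>)"
    by (simp add: x_def frac_def algebra_simps)
  then show ?thesis by (simp only: fd_def frac_add_of_int_right)
qed

lemma ni: "1 \<le> d \<Longrightarrow> real d * \<alpha> \<notin> \<int>"
  using irr_mult[OF irr, of "int d"] by simp

lemma fd_pos: "n < m \<Longrightarrow> fd n m = frac (real (m - n) * \<alpha>)"
  by (simp add: fd_eq of_nat_diff)
lemma fd_neg: "m < n \<Longrightarrow> fd n m = 1 - frac (real (n - m) * \<alpha>)"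
proof -
  assume h: "m < n"
  have "(real m - real n) * \<alpha> = - (real (n - m) * \<alpha>)" using h by (simp add: of_nat_diff algebra_simps)
  then show ?thesis using ni[of "n - m"] h by (simp add: fd_eq frac_neg)
qed

lemma fracpos: "1 \<le> d \<Longrightarrow> frac (real d * \<alpha>) > 0"
  using ni[of d] frac_ge_0[of "real d * \<alpha>"] frac_eq_0_iff by (metis order_le_less)

lemma Alt1: "A < 1" using LA1[of q1] fn'(1,2) frac_lt_1 by (meson le_less_trans)
lemma Blt1: "B < 1" using LB1[of q2] fn'(3,4) fracpos[of q2] by linarith

lemma frac_q1: "frac (real q1 * \<alpha>) = A"
  by (rule frac_shift[where k = "int a1"]) (use Apos Alt1 in \<open>auto simp: A_def\<close>)
lemma frac_q2: "frac (real q2 * \<alpha>) = 1 - B"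
  by (rule frac_shift[where k = "int a2 - 1"]) (use Bpos Blt1 in \<open>auto simp: B_def\<close>)

definition lab :: "nat \<Rightarrow> letter" where
  "lab n = (if n + q1 < Q then LA else if q2 \<le> n then LB else LC)"
definition T :: "nat \<Rightarrow> nat" where
  "T n = (if n + q1 < Q then n + q1 else if q2 \<le> n then n - q2 else n + q1 - q2)"
definition len :: "letter \<Rightarrow> real" where "len c = letter_len \<alpha> a1 q1 a2 q2 c"

lemma len_simps: "len LA = A" "len LB = B" "len LC = A + B"
  by (simp_all add: len_def A_def B_def)

lemma T_lt: "n < Q \<Longrightarrow> T n < Q"
  using QQ fn'(1,2,3,4) by (auto simp: T_def)

lemma T_int: "n < Q \<Longrightarrow> int (T n) = int n + dl (int Q) (int q1) (int q2) (lab n)"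
  using QQ fn'(1,2,3,4) by (auto simp: T_def lab_def of_nat_diff)

lemma lab_iff: "n < Q \<Longrightarrow> lab n = c \<longleftrightarrow> lo (int Q) (int q1) (int q2) c \<le> int n \<and> int n < hi (int Q) (int q1) (int q2) c"
  using QQ by (cases c) (auto simp: lab_def)

lemma len_inj: "len c1 = len c2 \<Longrightarrow> c1 = c2"
proof -
  assume h: "len c1 = len c2"
  have "A \<noteq> B"
  proof
    assume "A = B"
    then have "real (q1 + q2) * \<alpha> = of_int (int (a1 + a2))" by (simp add: A_def B_def algebra_simps)
    then have "real (q1 + q2) * \<alpha> \<in> \<int>" by (metis Ints_of_int)
    with ni[of "q1 + q2"] fn'(1) show False by simp
  qed
  then show ?thesis using h Apos Bpos by (cases c1; cases c2) (auto simp: len_simps)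
qed

end

context fs begin

lemma caseA:
  assumes n: "n + q1 < Q" and m: "m < Q" "m \<noteq> n"
  shows "fd n m \<ge> A"
proof (cases "n < m")
  case True
  then show ?thesis using LA1[of "m - n"] m by (simp add: fd_pos)
next
  case False
  then have mn: "m < n" using m by simp
  define d where "d = n - m"
  have d1: "1 \<le> d" "d + q1 \<le> N" using mn n by (auto simp: d_def)
  define f where "f = frac (real d * \<alpha>)"
  have f1: "f < 1" by (simp add: f_def frac_lt_1)
  have ge: "frac (real (d + q1) * \<alpha>) \<ge> A" using LA1[of "d + q1"] d1 by simp
  have "f + A < 1"
  proof (rule ccontr)
    assume "\<not> ?thesis"
    then have "frac (real (d + q1) * \<alpha>) = f + A - 1"
      by (intro frac_shift[where k = "\<lfloor>real d * \<alpha>\<rfloor> + int a1 + 1"])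
         (use f1 Alt1 in \<open>auto simp: f_def frac_def A_def algebra_simps\<close>)
    with ge f1 show False by simp
  qed
  then show ?thesis using mn by (simp add: fd_neg d_def[symmetric] f_def)
qed

lemma caseB:
  assumes n: "q2 \<le> n" "n < Q" and m: "m < Q" "m \<noteq> n"
  shows "fd n m \<ge> B"
proof (cases "n < m")
  case False
  then have mn: "m < n" using m by simp
  then show ?thesis using LB1[of "n - m"] n by (simp add: fd_neg)
next
  case True
  define d where "d = m - n"
  have d1: "1 \<le> d" "d + q2 \<le> N" using True n m by (auto simp: d_def)
  define f where "f = frac (real d * \<alpha>)"
  have f0: "f > 0" using fracpos d1 by (simp add: f_def)
  have f1: "f < 1" by (simp add: f_def frac_lt_1)
  have ge: "1 - frac (real (d + q2) * \<alpha>) \<ge> B" using LB1[of "d + q2"] d1 by simp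
  have "f \<ge> B"
  proof (rule ccontr)
    assume "\<not> ?thesis"
    then have "frac (real (d + q2) * \<alpha>) = f + 1 - B"
      by (intro frac_shift[where k = "\<lfloor>real d * \<alpha>\<rfloor> + int a2 - 1"])
         (use f0 Bpos Blt1 in \<open>auto simp: f_def frac_def B_def algebra_simps\<close>)
    with ge f0 show False by simp
  qed
  then show ?thesis using True by (simp add: fd_pos d_def[symmetric] f_def)
qed

lemma caseC:
  assumes n: "\<not> n + q1 < Q" "n < q2" and m: "m < Q" "m \<noteq> n"
  shows "fd n m \<ge> A + B"
proof (cases "n < m")
  case True
  define d where "d = m - n"
  have d1: "1 \<le> d" "d < q1" using True n m by (auto simp: d_def)
  define f where "f = frac (real d * \<alpha>)"
  have f1: "f < 1" by (simp add: f_def frac_lt_1)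
  have fA: "f > A" using LA1[of d] d1 fn'(2) by (auto simp: f_def)
  have e1: "1 \<le> q1 - d" "q1 - d \<le> N" using d1 fn'(2) by auto
  have "frac (real (q1 - d) * \<alpha>) = A + 1 - f"
    by (intro frac_shift[where k = "int a1 - \<lfloor>real d * \<alpha>\<rfloor> - 1"])
       (use fA f1 Apos d1 in \<open>auto simp: f_def frac_def A_def algebra_simps of_nat_diff\<close>)
  then have "f - A \<ge> B" using LB1[OF e1] by simp
  then show ?thesis using True by (simp add: fd_pos d_def[symmetric] f_def)
next
  case False
  then have mn: "m < n" using m by simp
  define d where "d = n - m"
  have d1: "1 \<le> d" "d < q2" using mn n by (auto simp: d_def)
  define g where "g = 1 - frac (real d * \<alpha>)"
  have g1: "g < 1" using fracpos[OF d1(1)] by (simp add: g_def)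
  have gB: "g > B" using LB1[of d] d1 fn'(4) by (auto simp: g_def)
  have e1: "1 \<le> q2 - d" "q2 - d \<le> N" using d1 fn'(4) by auto
  have "frac (real (q2 - d) * \<alpha>) = g - B"
    by (intro frac_shift[where k = "int a2 - \<lfloor>real d * \<alpha>\<rfloor> - 1"])
       (use gB g1 d1 Bpos[unfolded B_def] in \<open>auto simp: g_def frac_def B_def algebra_simps of_nat_diff\<close>)
  then have "g - B \<ge> A" using LA1[OF e1] by simp
  then show ?thesis using mn by (simp add: fd_neg d_def[symmetric] g_def)
qed

lemma L4: assumes n: "n < Q"
  shows "fd n (T n) = len (lab n) \<and> (\<forall>m<Q. m \<noteq> n \<longrightarrow> fd n m \<ge> len (lab n))"
proof (cases "n + q1 < Q")
  case True
  have "fd n (T n) = A" using True fn'(1) frac_q1 by (simp add: T_def fd_pos)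
  then show ?thesis using True caseA by (simp add: lab_def len_simps)
next
  case F: False
  show ?thesis
  proof (cases "q2 \<le> n")
    case True
    have "fd n (T n) = B" using True F fn'(3) frac_q2 by (simp add: T_def fd_neg)
    then show ?thesis using True F caseB n by (simp add: lab_def len_simps)
  next
    case False
    define m where "m = (if n = 0 then 1 else 0::nat)"
    have m: "m < Q" "m \<noteq> n" using Q2 by (auto simp: m_def)
    have "A + B \<le> fd n m" using caseC[OF F _ m] False by simp
    then have AB: "A + B < 1" using frac_lt_1 by (metis fd_def le_less_trans)
    have "(real (T n) - real n) * \<alpha> = (A + B) + of_int (int a1 - int a2)"
    proof -
      have "q2 \<le> n + q1" using F fn'(4) by simp
      then have "real (T n) = real n + real q1 - real q2" using F False by (simp add: T_def of_nat_diff)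
      then show ?thesis by (simp add: A_def B_def) (simp add: algebra_simps)
    qed
    then have "fd n (T n) = A + B" using AB Apos Bpos
      by (simp only: fd_eq frac_add_of_int_right) simp
    then show ?thesis using False F caseC by (simp add: lab_def len_simps)
  qed
qed

end

lemma frac_m1: "-1 \<le> (v::real) \<Longrightarrow> v < 0 \<Longrightarrow> frac v = v + 1"
  by (rule frac_shift[where k = "-1"]) auto

context fs begin

abbreviation "s \<equiv> sorted_pts Q \<alpha>"

lemma lenpos: "len c > 0" using Apos Bpos by (cases c) (auto simp: len_simps)

lemma fd_self: "fd n n = 0" by (simp add: fd_def)

lemma x_inj: "inj_on x {..<Q}"
proof (rule inj_onI)
  fix m n assume h: "m \<in> {..<Q}" "n \<in> {..<Q}" "x m = x n"
  show "m = n"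
  proof (rule ccontr)
    assume "m \<noteq> n"
    then have "fd n m \<ge> len (lab n)" using L4[of n] h by auto
    moreover have "fd n m = 0" using h by (simp add: fd_def)
    ultimately show False using lenpos[of "lab n"] by simp
  qed
qed

lemma s_def': "s = sort (map x [0..<Q])"
proof -
  have "x = (\<lambda>n. frac (real n * \<alpha>))" by (rule ext) (simp add: x_def)
  then show ?thesis by (simp add: sorted_pts_def)
qed
lemma s_len: "length s = Q" by (simp add: s_def')
lemma s_set: "set s = x ` {..<Q}" by (auto simp: s_def')
lemma s_sorted: "sorted s" by (simp add: s_def')
lemma s_dist: "distinct s" using x_inj by (simp add: s_def' distinct_map lessThan_atLeast0)
lemma s_strict: "i < j \<Longrightarrow> j < Q \<Longrightarrow> s ! i < s ! j"
  using sorted_nth_mono[OF s_sorted, of i j] nth_eq_iff_index_eq[OF s_dist, of i j] s_len by force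
lemma s_range: "i < Q \<Longrightarrow> 0 \<le> s ! i \<and> s ! i < 1"
proof -
  assume "i < Q" then have "s ! i \<in> set s" using s_len by simp
  then show ?thesis by (auto simp: s_set x_def frac_lt_1)
qed
lemma s0: "s ! 0 = 0"
proof -
  have "x 0 \<in> set s" using Q2 by (simp add: s_set)
  then obtain j where j: "j < Q" "s ! j = 0" using s_len by (auto simp: in_set_conv_nth x_def)
  have "s ! 0 \<le> s ! j" using sorted_nth_mono[OF s_sorted, of 0 j] j s_len by simp
  then show ?thesis using j s_range[of 0] Q2 by simp
qed

lemma gap: assumes i: "i < Q"
  shows "gap_len Q \<alpha> i = frac (s ! (Suc i mod Q) - s ! i) \<and>
    (\<forall>j<Q. j \<noteq> i \<longrightarrow> frac (s ! (Suc i mod Q) - s ! i) \<le> frac (s ! j - s ! i))"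
proof (cases "Suc i < Q")
  case True
  have lt: "s ! i < s ! Suc i" using s_strict True by simp
  have r: "0 \<le> s ! i" "s ! Suc i < 1" using s_range True i by auto
  have e: "frac (s ! Suc i - s ! i) = s ! Suc i - s ! i" using lt r s_range[of i] i by (simp add: frac_eq)
  have "frac (s ! Suc i - s ! i) \<le> frac (s ! j - s ! i)" if j: "j < Q" "j \<noteq> i" for j
  proof (cases "j < i")
    case True
    have "s ! j < s ! i" "0 \<le> s ! j" "s ! i < 1" using s_strict True i s_range j by auto
    then have "frac (s ! j - s ! i) = s ! j - s ! i + 1" by (intro frac_m1) auto
    then show ?thesis using e r \<open>0 \<le> s ! j\<close> by simp
  next
    case False
    then have "Suc i \<le> j" using j by simp
    then have "s ! Suc i \<le> s ! j" using sorted_nth_mono[OF s_sorted] j s_len by simp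
    moreover have "s ! j < 1" using s_range j by simp
    ultimately have "frac (s ! j - s ! i) = s ! j - s ! i" using lt r by (simp add: frac_eq)
    then show ?thesis using e \<open>s ! Suc i \<le> s ! j\<close> by simp
  qed
  then show ?thesis using True e by (simp add: gap_len_def Let_def)
next
  case False
  then have iQ: "Suc i = Q" using i by simp
  then have i0: "0 < i" using Q2 by simp
  have si: "0 < s ! i" "s ! i < 1" using s_strict[of 0 i] s0 i0 i s_range by auto
  have e: "frac (s ! 0 - s ! i) = 1 - s ! i" using si s0 frac_m1[of "- s ! i"] by simp
  have "frac (s ! 0 - s ! i) \<le> frac (s ! j - s ! i)" if j: "j < Q" "j \<noteq> i" for j
  proof -
    have "j < i" using j iQ by simp
    then have "s ! j < s ! i" "0 \<le> s ! j" using s_strict i s_range j by auto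
    then have "frac (s ! j - s ! i) = s ! j - s ! i + 1" using si by (intro frac_m1) auto
    then show ?thesis using e \<open>0 \<le> s ! j\<close> by simp
  qed
  then show ?thesis using iQ e s0 by (simp add: gap_len_def Let_def)
qed

definition pos :: "nat \<Rightarrow> nat" where "pos i = inv_into {..<Q} x (s ! i)"

lemma pos: "i < Q \<Longrightarrow> pos i < Q \<and> x (pos i) = s ! i"
proof -
  assume "i < Q" then have "s ! i \<in> x ` {..<Q}" using s_len s_set[symmetric] by simp
  then show ?thesis using inv_into_into[of "s ! i" x "{..<Q}"] by (simp add: pos_def f_inv_into_f)
qed

lemma pos_inj: "inj_on pos {..<Q}"
proof (rule inj_onI)
  fix i j assume h: "i \<in> {..<Q}" "j \<in> {..<Q}" "pos i = pos j"
  then have "s ! i = s ! j" using pos by (metis lessThan_iff)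
  then show "i = j" using nth_eq_iff_index_eq[OF s_dist] h s_len by simp
qed

lemma step: assumes i: "i < Q"
  shows "pos (Suc i mod Q) = T (pos i) \<and> gap_len Q \<alpha> i = len (lab (pos i))"
proof -
  define n where "n = pos i"
  define m0 where "m0 = pos (Suc i mod Q)"
  have si: "Suc i mod Q < Q" using Q2 by simp
  have n: "n < Q" "x n = s ! i" using pos i by (auto simp: n_def)
  have m0: "m0 < Q" "x m0 = s ! (Suc i mod Q)" using pos si by (auto simp: m0_def)
  have ne: "Suc i mod Q \<noteq> i"
  proof (cases "Suc i < Q")
    case False then have "Suc i = Q" using i by simp
    then show ?thesis using Q2 by auto
  qed simp
  have "m0 \<noteq> n" using inj_onD[OF pos_inj, of "Suc i mod Q" i] ne si i unfolding m0_def n_def by auto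
  have g: "gap_len Q \<alpha> i = fd n m0" using gap[OF i] n m0 by (simp add: fd_def)
  have L: "fd n (T n) = len (lab n)" "fd n m0 \<ge> len (lab n)" using L4[OF n(1)] m0 \<open>m0 \<noteq> n\<close> by auto
  have Tn: "T n < Q" using T_lt n by simp
  have "T n \<noteq> n" using L(1) lenpos[of "lab n"] fd_self[of n] by auto
  have "x (T n) \<in> set s" using Tn s_set by simp
  then obtain j where j: "j < Q" "s ! j = x (T n)" using s_len by (auto simp: in_set_conv_nth)
  have "j \<noteq> i"
  proof
    assume "j = i" then have "x (T n) = x n" using j n by simp
    then show False using inj_onD[OF x_inj, of "T n" n] Tn n \<open>T n \<noteq> n\<close> by simp
  qed
  then have "frac (s ! (Suc i mod Q) - s ! i) \<le> frac (s ! j - s ! i)" using gap[OF i] j by blast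
  then have "fd n m0 \<le> fd n (T n)" using j n m0 by (simp add: fd_def)
  then have eq: "fd n m0 = fd n (T n)" using L by simp
  then obtain k where k: "(real m0 - real n) * \<alpha> = (real (T n) - real n) * \<alpha> + of_int k"
    by (auto simp: fd_eq elim: frac_eqE)
  have "m0 = T n"
  proof (rule ccontr)
    assume "m0 \<noteq> T n"
    then have "int m0 - int (T n) \<noteq> 0" by simp
    moreover have "real_of_int (int m0 - int (T n)) * \<alpha> = of_int k" using k by (simp add: algebra_simps)
    ultimately show False using irr_mult[OF irr] by (metis Ints_of_int)
  qed
  then show ?thesis using g eq L by (simp add: m0_def n_def)
qed

lemma iter: "i < Q \<Longrightarrow> pos ((i + j) mod Q) = (T ^^ j) (pos i)"
proof (induction j)
  case 0 then show ?case by simp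
next
  case (Suc j)
  have "(i + Suc j) mod Q = Suc ((i + j) mod Q) mod Q" by (simp add: mod_Suc_eq)
  then show ?case using step[of "(i + j) mod Q"] Suc Q2 by simp
qed

end

context fs begin

lemma count1: "word_count Q \<alpha> a1 q1 a2 q2 w = card {n. n < Q \<and> (\<forall>j<length w. lab ((T ^^ j) n) = w ! j)}"
proof -
  define P where "P n = (\<forall>j<length w. lab ((T ^^ j) n) = w ! j)" for n
  have "{i. i < Q \<and> (\<forall>j < length w. gap_len Q \<alpha> ((i + j) mod Q) = letter_len \<alpha> a1 q1 a2 q2 (w ! j))}
      = {i \<in> {..<Q}. P (pos i)}"
  proof (intro Collect_cong iffI conjI)
    fix i
    have e: "i < Q \<Longrightarrow> gap_len Q \<alpha> ((i + j) mod Q) = len (lab ((T ^^ j) (pos i)))" for j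
      using step[of "(i + j) mod Q"] iter[of i j] Q2 by simp
    show "i < Q \<and> (\<forall>j<length w. gap_len Q \<alpha> ((i + j) mod Q) = letter_len \<alpha> a1 q1 a2 q2 (w ! j)) \<Longrightarrow> i \<in> {..<Q}"
      by simp
    show "i < Q \<and> (\<forall>j<length w. gap_len Q \<alpha> ((i + j) mod Q) = letter_len \<alpha> a1 q1 a2 q2 (w ! j)) \<Longrightarrow> P (pos i)"
      using e len_inj unfolding P_def len_def[symmetric] by auto
    show "i \<in> {..<Q} \<and> P (pos i) \<Longrightarrow> i < Q" by simp
    show "i \<in> {..<Q} \<and> P (pos i) \<Longrightarrow> \<forall>j<length w. gap_len Q \<alpha> ((i + j) mod Q) = letter_len \<alpha> a1 q1 a2 q2 (w ! j)"
      using e unfolding P_def len_def[symmetric] by auto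
  qed
  moreover have "card {i \<in> {..<Q}. P (pos i)} = card (pos ` {i \<in> {..<Q}. P (pos i)})"
    using pos_inj by (intro card_image[symmetric]) (auto intro: inj_on_subset)
  moreover have "pos ` {i \<in> {..<Q}. P (pos i)} = {n \<in> pos ` {..<Q}. P n}" by auto
  moreover have "pos ` {..<Q} = {..<Q}" using pos by (intro endo_inj_surj pos_inj) auto
  ultimately show ?thesis unfolding word_count_def P_def by simp
qed

lemma cyl: "m < Q \<Longrightarrow> (\<forall>j<length w. lab ((T ^^ j) m) = w ! j) \<longleftrightarrow> condm (int Q) (int q1) (int q2) (int m) w"
proof (induction w arbitrary: m)
  case Nil then show ?case by simp
next
  case (Cons c cs)
  have "(\<forall>j<length (c # cs). lab ((T ^^ j) m) = (c # cs) ! j) \<longleftrightarrow>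
        lab m = c \<and> (\<forall>j<length cs. lab ((T ^^ j) (T m)) = cs ! j)"
    (is "?L \<longleftrightarrow> ?R")
  proof
    assume ?L
    then have "lab ((T ^^ Suc j) m) = (c # cs) ! Suc j" if "j < length cs" for j using that by fastforce
    then show ?R using \<open>?L\<close> by (auto simp: funpow_Suc_right simp del: funpow.simps)
  next
    assume ?R
    show ?L
    proof (intro allI impI)
      fix j assume "j < length (c # cs)"
      then show "lab ((T ^^ j) m) = (c # cs) ! j"
        using \<open>?R\<close> by (cases j) (auto simp: funpow_Suc_right simp del: funpow.simps)
    qed
  qed
  also have "\<dots> \<longleftrightarrow> condm (int Q) (int q1) (int q2) (int m) (c # cs)"
  proof (cases "lab m = c")
    case True
    then have "int (T m) = int m + dl (int Q) (int q1) (int q2) c" using T_int Cons.prems by simp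
    moreover have "lo (int Q) (int q1) (int q2) c \<le> int m \<and> int m < hi (int Q) (int q1) (int q2) c"
      using lab_iff[OF Cons.prems, of c] True by simp
    ultimately show ?thesis using Cons.IH[of "T m"] T_lt[OF Cons.prems] True by simp
  next
    case False then show ?thesis using lab_iff[OF Cons.prems, of c] by auto
  qed
  finally show ?case .
qed

lemma count2: assumes w: "w \<noteq> []"
  shows "word_count Q \<alpha> a1 q1 a2 q2 w = nat (Ub (int Q) (int q1) (int q2) 0 w - Lb (int Q) (int q1) (int q2) 0 w)"
proof -
  define L where "L = Lb (int Q) (int q1) (int q2) 0 w"
  define U where "U = Ub (int Q) (int q1) (int q2) 0 w"
  have L0: "0 \<le> L" using Lb_ge[OF w, of "int Q" "int q1" "int q2" 0] fn'(2) Q2 unfolding L_def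
    by (cases "hd w") auto
  have UQ: "U \<le> int Q" using Ub_le[OF w, of "int Q" "int q1" "int q2" 0] fn'(4) unfolding U_def
    by (cases "hd w") auto
  have "{n. n < Q \<and> (\<forall>j<length w. lab ((T ^^ j) n) = w ! j)} = {n. n < Q \<and> L \<le> int n \<and> int n < U}"
    using cyl condm_iff[OF w, of "int Q" "int q1" "int q2" _ 0] by (auto simp: L_def U_def)
  also have "\<dots> = {nat L..<nat U}" using L0 UQ by auto
  finally show ?thesis using count1 L0 by (simp add: L_def[symmetric] U_def[symmetric] nat_diff_distrib)
qed

lemma count_le: "word_count Q \<alpha> a1 q1 a2 q2 w \<le> Q"
proof -
  have "word_count Q \<alpha> a1 q1 a2 q2 w \<le> card {..<Q}"
    unfolding word_count_def by (intro card_mono) auto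
  then show ?thesis by simp
qed

lemma final: assumes w: "w \<noteq> []"
  shows "real (word_count Q \<alpha> a1 q1 a2 q2 w) / real Q = FF w (real q1 / real Q, real q2 / real Q)"
proof -
  have Qp: "real Q > 0" using Q2 by simp
  let ?U = "Ub (real Q) (real q1) (real q2) 0 w" and ?L = "Lb (real Q) (real q1) (real q2) 0 w"
  let ?U1 = "Ub 1 (real q1 / real Q) (real q2 / real Q) 0 w" and ?L1 = "Lb 1 (real q1 / real Q) (real q2 / real Q) 0 w"
  have c1: "real (word_count Q \<alpha> a1 q1 a2 q2 w) = max 0 (?U - ?L)"
    using count2[OF w] of_int_Ub[of "int Q" "int q1" "int q2" 0 w, where 'b=real]
      of_int_Lb[of "int Q" "int q1" "int q2" 0 w, where 'b=real] by simp
  have c2: "?U = real Q * ?U1" using hom_Ub[OF Qp, of 1 "real q1 / real Q" "real q2 / real Q" 0 w] Qp by simp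
  have c3: "?L = real Q * ?L1" using hom_Lb[OF Qp, of 1 "real q1 / real Q" "real q2 / real Q" 0 w] Qp by simp
  have e: "real (word_count Q \<alpha> a1 q1 a2 q2 w) / real Q = max 0 (?U1 - ?L1)"
  proof -
    have "max 0 (real Q * (?U1 - ?L1)) = real Q * max 0 (?U1 - ?L1)"
      using Qp by (simp add: max_mult_distrib_left)
    then show ?thesis using c1 c2 c3 Qp by (simp add: right_diff_distrib[symmetric])
  qed
  have "real (word_count Q \<alpha> a1 q1 a2 q2 w) / real Q \<le> 1" using count_le Qp by simp
  then show ?thesis using e by (simp add: FF_def)
qed

end

theorem lemma3:
  shows "\<exists>F :: letter list \<Rightarrow> real \<times> real \<Rightarrow> real.
    (\<forall>w. length w \<ge> 1 \<longrightarrow>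
       continuous_on Tri (F w) \<and> F w ` Tri \<subseteq> {0..1} \<and>
       (\<forall>(Q::nat) (\<alpha>::real) a1 q1 a2 q2.
          Q \<ge> 2 \<longrightarrow> \<alpha> \<notin> \<rat> \<longrightarrow> 0 < \<alpha> \<longrightarrow> \<alpha> < 1 \<longrightarrow>
          farey_nbrs (Q - 1) \<alpha> a1 q1 a2 q2 \<longrightarrow>
          real (word_count Q \<alpha> a1 q1 a2 q2 w) / real Q = F w (real q1 / real Q, real q2 / real Q))) \<and>
    (\<forall>x y. (x, y) \<in> Tri \<longrightarrow>
       F [LA] (x, y) = 1 - x \<and> F [LB] (x, y) = 1 - y \<and> F [LC] (x, y) = x + y - 1)"
proof (intro exI[of _ FF] conjI allI impI)
  fix w :: "letter list" assume "length w \<ge> 1"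
  then have w: "w \<noteq> []" by auto
  show "continuous_on Tri (FF w)" by (rule FF_cont)
  show "FF w ` Tri \<subseteq> {0..1}" by (rule FF_range)
  fix Q :: nat and \<alpha> :: real and a1 q1 a2 q2
  assume "Q \<ge> 2" "\<alpha> \<notin> \<rat>" "0 < \<alpha>" "\<alpha> < 1" "farey_nbrs (Q - 1) \<alpha> a1 q1 a2 q2"
  then interpret fs Q \<alpha> a1 q1 a2 q2 by unfold_locales
  show "real (word_count Q \<alpha> a1 q1 a2 q2 w) / real Q = FF w (real q1 / real Q, real q2 / real Q)"
    by (rule final[OF w])
qed (use FF_one in auto)

end
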